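(* Let $k\ge2$, $q_1,q_2$ positive integers, $m$ a real number, and $\gamma_2=\begin{pmatrix}a&b\\c&d\end{pmatrix}\in\Gamma_0(q_1q_2)$. If $\mathcal P_0\in\mathcal P(k;m,q_1)$, then the polynomial $\mathcal P_0|_{2-k}\gamma_2(x)=(cx+d)^{k-2}\mathcal P_0\!\left(\frac{ax+b}{cx+d}\right)$ also lies in $\mathcal P(k;m,q_1)$.
   Context: $\mathcal P(k;m,q)=\Big\{\sum_{n=0}^{k-2}a_nx^{k-n-2}\in\mathbb Q[x]:\ q^{n+1}a_n\in m\mathbb Z\text{ for all }n\Big\}$, where $m\mathbb Z=\{mt:t\in\mathbb Z\}$. *)

theory Defs
  imports Complex_Main "HOL-Computational_Algebra.Polynomial"
begin

text \<open>The set P(k;m,q): polynomials sum_{n=0}^{k-2} a_n x^(k-n-2) in Q[x]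
  (i.e. degree at most k-2, a_n = coefficient of x^(k-2-n)) with
  q^(n+1) a_n in m Z (as a subset of the reals).\<close>
definition Pset :: "nat \<Rightarrow> real \<Rightarrow> nat \<Rightarrow> rat poly set" where
  "Pset k m q = {p. degree p \<le> k - 2 \<and>
     (\<forall>n \<le> k - 2. \<exists>t::int.
        real_of_rat (of_nat q ^ (n + 1) * coeff p (k - 2 - n)) = m * of_int t)}"

definition Gamma0 :: "int \<Rightarrow> (int \<times> int \<times> int \<times> int) set" where
  "Gamma0 N = {(a, b, c, d). a * d - b * c = 1 \<and> N dvd c}"

end

theory Submission
  imports Defs
begin

definition wint :: "nat \<Rightarrow> nat \<Rightarrow> rat poly \<Rightarrow> bool" where
  "wint q e f \<longleftrightarrow> (\<forall>i. of_nat q ^ e * coeff f i / of_nat q ^ i \<in> \<int>)"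

lemma wint_mult:
  assumes q: "q > 0" and f: "wint q e1 f" and g: "wint q e2 g"
  shows "wint q (e1 + e2) (f * g)"
  unfolding wint_def
proof
  fix i
  have qz: "(of_nat q :: rat) \<noteq> 0" using q by simp
  have "of_nat q ^ (e1 + e2) * coeff (f * g) i / of_nat q ^ i =
        (\<Sum>j\<le>i. (of_nat q ^ e1 * coeff f j / of_nat q ^ j) *
                 (of_nat q ^ e2 * coeff g (i - j) / of_nat q ^ (i - j)))"
    unfolding coeff_mult sum_distrib_left sum_divide_distrib
  proof (rule sum.cong[OF refl])
    fix j assume "j \<in> {..i}"
    then have "(of_nat q :: rat) ^ i = of_nat q ^ j * of_nat q ^ (i - j)"
      by (simp flip: power_add)
    then show "of_nat q ^ (e1 + e2) * (coeff f j * coeff g (i - j)) / of_nat q ^ i =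
        (of_nat q ^ e1 * coeff f j / of_nat q ^ j) *
                 (of_nat q ^ e2 * coeff g (i - j) / of_nat q ^ (i - j))"
      using qz by (simp add: power_add field_simps)
  qed
  also have "\<dots> \<in> \<int>"
    using f g unfolding wint_def by (intro Ints_sum Ints_mult) auto
  finally show "of_nat q ^ (e1 + e2) * coeff (f * g) i / of_nat q ^ i \<in> \<int>" .
qed

lemma wint_one: "wint q 0 1"
  unfolding wint_def by (auto simp: coeff_1)

lemma wint_power:
  assumes q: "q > 0" and f: "wint q e f"
  shows "wint q (e * n) (f ^ n)"
proof (induction n)
  case 0 then show ?case using wint_one by simp
next
  case (Suc n)
  have "wint q (e + e * n) (f * f ^ n)" by (rule wint_mult[OF q f Suc])
  then show ?case by (simp add: add.commute)
qed

definition Mset :: "real \<Rightarrow> rat set" where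
  "Mset m = {r. \<exists>t::int. real_of_rat r = m * of_int t}"

lemma Mset_mult:
  assumes "r \<in> Mset m" "z \<in> \<int>" shows "r * z \<in> Mset m"
proof -
  obtain t where t: "real_of_rat r = m * of_int t" using assms(1) unfolding Mset_def by auto
  obtain s where s: "z = of_int s" using assms(2) Ints_cases by blast
  have "real_of_rat (r * z) = m * of_int (t * s)"
    using t s by (simp add: of_rat_mult)
  then show ?thesis unfolding Mset_def by blast
qed

lemma Mset_sum:
  assumes "\<And>x. x \<in> A \<Longrightarrow> f x \<in> Mset m" shows "sum f A \<in> Mset m"
  using assms
proof (induction A rule: infinite_finite_induct)
  case (infinite A) then show ?case unfolding Mset_def by (auto intro: exI[of _ 0])
next
  case empty then show ?case unfolding Mset_def by (auto intro: exI[of _ 0])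
next
  case (insert x F)
  then have a: "f x \<in> Mset m" and b: "sum f F \<in> Mset m" by auto
  obtain t where t: "real_of_rat (f x) = m * of_int t" using a unfolding Mset_def by auto
  obtain s where s: "real_of_rat (sum f F) = m * of_int s" using b unfolding Mset_def by auto
  have "real_of_rat (sum f (insert x F)) = m * of_int (t + s)"
    using insert(1,2) t s by (simp add: of_rat_add algebra_simps)
  then show ?case unfolding Mset_def by blast
qed

theorem lemma6p2:
  fixes k q1 q2 :: nat and m :: real and a b c d :: int and P0 :: "rat poly"
  assumes "k \<ge> 2" and "q1 > 0" and "q2 > 0"
    and "(a, b, c, d) \<in> Gamma0 (int (q1 * q2))"
    and "P0 \<in> Pset k m q1"
  shows "\<exists>Q \<in> Pset k m q1. \<forall>x::rat. of_int c * x + of_int d \<noteq> 0 \<longrightarrow>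
           poly Q x = (of_int c * x + of_int d) ^ (k - 2) *
                      poly P0 ((of_int a * x + of_int b) / (of_int c * x + of_int d))"
proof -
  define K where "K = k - 2"
  define q where "q = q1"
  have q: "q > 0" using assms(2) q_def by simp
  have qz: "(of_nat q :: rat) \<noteq> 0" using q by simp
  have cdvd: "int q dvd c" using assms(4) unfolding Gamma0_def q_def
    by (auto intro: dvd_trans[of _ "int (q1 * q2)"])
  have degP: "degree P0 \<le> K" and PM: "\<And>n. n \<le> K \<Longrightarrow>
      \<exists>t::int. real_of_rat (of_nat q ^ (n + 1) * coeff P0 (K - n)) = m * of_int t"
    using assms(5) unfolding Pset_def K_def q_def by auto
  define A :: "rat poly" where "A = [:of_int b, of_int a:]"
  define C :: "rat poly" where "C = [:of_int d, of_int c:]"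
  define Q where "Q = (\<Sum>j\<le>K. smult (coeff P0 j) (A ^ j * C ^ (K - j)))"
  have wA: "wint q 1 A"
    unfolding wint_def A_def
  proof
    fix i show "of_nat q ^ 1 * coeff [:of_int b, of_int a:] i / of_nat q ^ i \<in> (\<int> :: rat set)"
      using qz by (cases i; cases "i - 1") auto
  qed
  have wC: "wint q 0 C"
    unfolding wint_def C_def
  proof
    fix i
    obtain c' where c': "c = int q * c'" using cdvd by blast
    show "of_nat q ^ 0 * coeff [:of_int d, of_int c:] i / of_nat q ^ i \<in> (\<int> :: rat set)"
      using qz c' by (cases i; cases "i - 1") auto
  qed
  have wT: "wint q j (A ^ j * C ^ (K - j))" for j
    using wint_mult[OF q wint_power[OF q wA, of j] wint_power[OF q wC, of "K - j"]] by simp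
  have degQ: "degree Q \<le> K"
    unfolding Q_def
  proof (rule degree_sum_le)
    fix j assume j: "j \<in> {..K}"
    have "degree (A ^ j * C ^ (K - j)) \<le> degree (A ^ j) + degree (C ^ (K - j))"
      by (rule degree_mult_le)
    also have "\<dots> \<le> j * degree A + (K - j) * degree C"
      by (intro add_mono) (metis mult.commute degree_power_le)+
    also have "\<dots> \<le> j * 1 + (K - j) * 1"
      unfolding A_def C_def by (intro add_mono mult_left_mono) auto
    also have "\<dots> = K" using j by simp
    finally show "degree (smult (coeff P0 j) (A ^ j * C ^ (K - j))) \<le> K"
      using degree_smult_le order_trans by blast
  qed simp
  have coefQ: "of_nat q ^ (K + 1) * coeff Q i / of_nat q ^ i \<in> Mset m" for i
  proof -
    have "of_nat q ^ (K + 1) * coeff Q i / of_nat q ^ i =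
      (\<Sum>j\<le>K. (of_nat q ^ (K + 1) * coeff P0 j / of_nat q ^ j) *
               (of_nat q ^ j * coeff (A ^ j * C ^ (K - j)) i / of_nat q ^ i))"
      unfolding Q_def coeff_sum coeff_smult sum_distrib_left sum_divide_distrib
      using qz by (intro sum.cong refl) (simp add: field_simps)
    also have "\<dots> \<in> Mset m"
    proof (rule Mset_sum)
      fix j assume j: "j \<in> {..K}"
      have "of_nat q ^ (K + 1) * coeff P0 j / of_nat q ^ j
            = of_nat q ^ ((K - j) + 1) * coeff P0 (K - (K - j))"
      proof -
        have "(of_nat q :: rat) ^ (K + 1) = of_nat q ^ ((K - j) + 1) * of_nat q ^ j"
          using j by (simp flip: power_add)
        then show ?thesis using qz j by simp
      qed
      also have "\<dots> \<in> Mset m" using PM[of "K - j"] unfolding Mset_def by auto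
      finally show "(of_nat q ^ (K + 1) * coeff P0 j / of_nat q ^ j) *
               (of_nat q ^ j * coeff (A ^ j * C ^ (K - j)) i / of_nat q ^ i) \<in> Mset m"
        using wT[of j] unfolding wint_def by (intro Mset_mult) auto
    qed
    finally show ?thesis .
  qed
  have QP: "Q \<in> Pset k m q1"
    unfolding Pset_def
  proof (intro CollectI conjI allI impI)
    show "degree Q \<le> k - 2" using degQ K_def by simp
    fix n assume n: "n \<le> k - 2"
    have "of_nat q ^ (K + 1) * coeff Q (K - n) / of_nat q ^ (K - n) =
          of_nat q ^ (n + 1) * coeff Q (K - n)"
    proof -
      have "(of_nat q :: rat) ^ (K + 1) = of_nat q ^ (n + 1) * of_nat q ^ (K - n)"
      proof -
        have "K + 1 = (n + 1) + (K - n)" using n K_def by simp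
        then show ?thesis by (metis power_add)
      qed
      then show ?thesis using qz by simp
    qed
    then show "\<exists>t::int. real_of_rat (of_nat q1 ^ (n + 1) * coeff Q (k - 2 - n)) = m * of_int t"
      using coefQ[of "K - n"] unfolding Mset_def K_def q_def by auto
  qed
  have ev: "poly Q x = (of_int c * x + of_int d) ^ K *
       poly P0 ((of_int a * x + of_int b) / (of_int c * x + of_int d))"
    if x: "of_int c * x + of_int d \<noteq> (0::rat)" for x
  proof -
    define y where "y = (of_int a * x + of_int b) / (of_int c * x + of_int d)"
    have pP: "poly P0 y = (\<Sum>j\<le>K. coeff P0 j * y ^ j)"
    proof -
      have "poly P0 y = (\<Sum>j\<le>degree P0. coeff P0 j * y ^ j)" by (rule poly_altdef)
      also have "\<dots> = (\<Sum>j\<le>K. coeff P0 j * y ^ j)"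
        using degP by (intro sum.mono_neutral_left) (auto simp: coeff_eq_0)
      finally show ?thesis .
    qed
    have "(of_int c * x + of_int d) ^ K * poly P0 y =
      (\<Sum>j\<le>K. coeff P0 j * ((of_int a * x + of_int b) ^ j * (of_int c * x + of_int d) ^ (K - j)))"
      unfolding pP sum_distrib_left
    proof (intro sum.cong refl)
      fix j assume j: "j \<in> {..K}"
      have "(of_int c * x + of_int d) ^ K = (of_int c * x + of_int d) ^ j * (of_int c * x + of_int d) ^ (K - j)"
        using j by (simp flip: power_add)
      then show "(of_int c * x + of_int d) ^ K * (coeff P0 j * y ^ j) =
        coeff P0 j * ((of_int a * x + of_int b) ^ j * (of_int c * x + of_int d) ^ (K - j))"
        using x unfolding y_def by (simp add: power_divide field_simps)
    qed
    moreover have "poly Q x = (\<Sum>j\<le>K. coeff P0 j * ((of_int a * x + of_int b) ^ j * (of_int c * x + of_int d) ^ (K - j)))"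
      unfolding Q_def poly_sum A_def C_def by (simp add: algebra_simps)
    ultimately show ?thesis unfolding y_def by simp
  qed
  show ?thesis using QP ev K_def by blast
qed

end
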